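(* Let $p$ be a prime, $d\ge1$, $g\in L^2(\mathbb{Z}_p^d)$ with $\|g\|_2=1$, and $A,B\subseteq\mathbb{Z}_p^d$. Let $E=\operatorname{supp}(g)$ and assume $g(x)$ is a positive real number for every $x\in E$ (so $g\ge 0$ everywhere). Then the Gabor system $\mathcal{G}(g,A,B)$ is an orthonormal basis of $L^2(\mathbb{Z}_p^d)$ if and only if all of the following hold: (i) $g=|E|^{-1/2}1_E$; (ii) $(E,B)$ is a spectral pair; (iii) $(E,A)$ is a tiling pair.
   Context: $\mathbb{Z}_p$ is the field of integers mod a prime $p$, $\mathbb{Z}_p^d$ the $d$-dimensional vector space over it, and $x\cdot b=\sum_i x_ib_i$. $\chi(t)=e^{2\pi i t/p}$ for $t\in\mathbb{Z}_p$. $L^2(\mathbb{Z}_p^d)$ is the space of functions $\mathbb{Z}_p^d\to\mathbb{C}$ with inner product $\langle f,h\rangle=\sum_{x\in\mathbb{Z}_p^d} f(x)\overline{h(x)}$ (counting measure). For $g\in L^2(\mathbb{Z}_p^d)$ and $A,B\subseteq\mathbb{Z}_p^d$, the Gabor system is $\mathcal{G}(g,A,B)=\{x\mapsto g(x-a)\chi(x\cdot b)\}_{a\in A,\ b\in B}$. $\operatorname{supp}(g)=\{x:g(x)\ne0\}$; $1_E$ is the indicator of $E$. A pair $(E,B)$ is a spectral pair if the functions $\{x\mapsto\chi(x\cdot b)\}_{b\in B}$, restricted to $E$, form an orthogonal basis of $L^2(E)$. A pair $(E,A)$ is a tiling pair if $\sum_{a\in A}1_E(x-a)=1$ for all $x\in\mathbb{Z}_p^d$.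 *)

theory Defs
  imports "HOL-Analysis.Analysis"
begin

text \<open>Z_p^d is modelled as vectors x :: nat => int with 0 <= x i < p for i < d and
  x i = 0 for i >= d. Arithmetic is componentwise mod p.\<close>

definition vecs :: "nat \<Rightarrow> nat \<Rightarrow> (nat \<Rightarrow> int) set" where
  "vecs p d = {x. (\<forall>i<d. 0 \<le> x i \<and> x i < int p) \<and> (\<forall>i\<ge>d. x i = 0)}"

definition vsub :: "nat \<Rightarrow> nat \<Rightarrow> (nat \<Rightarrow> int) \<Rightarrow> (nat \<Rightarrow> int) \<Rightarrow> (nat \<Rightarrow> int)" where
  "vsub p d x y = (\<lambda>i. if i < d then (x i - y i) mod int p else 0)"

definition dotp :: "nat \<Rightarrow> (nat \<Rightarrow> int) \<Rightarrow> (nat \<Rightarrow> int) \<Rightarrow> int" where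
  "dotp d x y = (\<Sum>i<d. x i * y i)"

definition chi :: "nat \<Rightarrow> int \<Rightarrow> complex" where
  "chi p t = exp (2 * complex_of_real pi * \<i> * of_int t / of_nat p)"

definition inner_on :: "'a set \<Rightarrow> ('a \<Rightarrow> complex) \<Rightarrow> ('a \<Rightarrow> complex) \<Rightarrow> complex" where
  "inner_on S f h = (\<Sum>x\<in>S. f x * cnj (h x))"

definition spans_on :: "'a set \<Rightarrow> 'i set \<Rightarrow> ('i \<Rightarrow> 'a \<Rightarrow> complex) \<Rightarrow> bool" where
  "spans_on S I \<phi> \<longleftrightarrow> (\<forall>f. \<exists>c. \<forall>x\<in>S. f x = (\<Sum>i\<in>I. c i * \<phi> i x))"

definition orthonormal_basis_on :: "'a set \<Rightarrow> 'i set \<Rightarrow> ('i \<Rightarrow> 'a \<Rightarrow> complex) \<Rightarrow> bool" where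
  "orthonormal_basis_on S I \<phi> \<longleftrightarrow>
     (\<forall>i\<in>I. \<forall>j\<in>I. inner_on S (\<phi> i) (\<phi> j) = (if i = j then 1 else 0)) \<and> spans_on S I \<phi>"

definition orthogonal_basis_on :: "'a set \<Rightarrow> 'i set \<Rightarrow> ('i \<Rightarrow> 'a \<Rightarrow> complex) \<Rightarrow> bool" where
  "orthogonal_basis_on S I \<phi> \<longleftrightarrow>
     (\<forall>i\<in>I. \<forall>j\<in>I. i \<noteq> j \<longrightarrow> inner_on S (\<phi> i) (\<phi> j) = 0) \<and>
     (\<forall>i\<in>I. inner_on S (\<phi> i) (\<phi> i) \<noteq> 0) \<and> spans_on S I \<phi>"

definition gabor :: "nat \<Rightarrow> nat \<Rightarrow> ((nat \<Rightarrow> int) \<Rightarrow> complex) \<Rightarrow> (nat \<Rightarrow> int) \<Rightarrow> (nat \<Rightarrow> int)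
    \<Rightarrow> (nat \<Rightarrow> int) \<Rightarrow> complex" where
  "gabor p d g a b = (\<lambda>x. g (vsub p d x a) * chi p (dotp d x b))"

definition spectral_pair :: "nat \<Rightarrow> nat \<Rightarrow> (nat \<Rightarrow> int) set \<Rightarrow> (nat \<Rightarrow> int) set \<Rightarrow> bool" where
  "spectral_pair p d E B \<longleftrightarrow> orthogonal_basis_on E B (\<lambda>b x. chi p (dotp d x b))"

definition tiling_pair :: "nat \<Rightarrow> nat \<Rightarrow> (nat \<Rightarrow> int) set \<Rightarrow> (nat \<Rightarrow> int) set \<Rightarrow> bool" where
  "tiling_pair p d E A \<longleftrightarrow>
     (\<forall>x\<in>vecs p d. (\<Sum>a\<in>A. (if vsub p d x a \<in> E then 1 else 0 :: int)) = 1)"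

end

theory Submission
  imports Defs
begin


lemma chi_add: "chi p (s + t) = chi p s * chi p t"
  unfolding chi_def by (simp add: exp_add[symmetric] add_divide_distrib distrib_left distrib_right)

lemma chi_norm: "norm (chi p t) = 1"
  unfolding chi_def by simp

lemma chi_cnj: "chi p t * cnj (chi p t) = 1"
  by (metis chi_norm complex_norm_square of_real_1 power_one)

lemma chi_period: assumes "p > 0" shows "chi p (t + int p * k) = chi p t"
proof -
  have "chi p (int p * k) = exp (\<i> * (of_int k * (of_real pi * 2)))"
    unfolding chi_def using assms by (simp add: field_simps)
  also have "\<dots> = 1" by simp
  finally show ?thesis by (simp add: chi_add)
qed

lemma chi_mod: assumes "p > 0" "s mod int p = t mod int p" shows "chi p s = chi p t"
proof -
  obtain k where "s = t + int p * k"
    using assms(2) by (metis mod_eqE mult.commute)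
  then show ?thesis using chi_period[OF assms(1)] by simp
qed


definition vadd :: "nat \<Rightarrow> nat \<Rightarrow> (nat \<Rightarrow> int) \<Rightarrow> (nat \<Rightarrow> int) \<Rightarrow> (nat \<Rightarrow> int)" where
  "vadd p d x y = (\<lambda>i. if i < d then (x i + y i) mod int p else 0)"

lemma vecs_finite: "finite (vecs p d)"
proof -
  have "vecs p d \<subseteq> (\<lambda>f i. if i < d then f i else 0) ` (PiE {..<d} (\<lambda>_. {0..<int p}))"
  proof
    fix x assume x: "x \<in> vecs p d"
    have "x = (\<lambda>i. if i < d then restrict x {..<d} i else 0)"
      using x unfolding vecs_def by auto
    moreover have "restrict x {..<d} \<in> PiE {..<d} (\<lambda>_. {0..<int p})"
      using x unfolding vecs_def by auto
    ultimately show "x \<in> (\<lambda>f i. if i < d then f i else 0) ` (PiE {..<d} (\<lambda>_. {0..<int p}))"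
      by blast
  qed
  moreover have "finite (PiE {..<d} (\<lambda>_. {0..<int p}))" by (rule finite_PiE) auto
  ultimately show ?thesis by (meson finite_imageI finite_subset)
qed

lemma zero_vecs: "p > 0 \<Longrightarrow> (\<lambda>i. 0) \<in> vecs p d" unfolding vecs_def by auto

lemma vsub_vecs: assumes "p > 0" shows "vsub p d x y \<in> vecs p d"
  using assms unfolding vecs_def vsub_def by auto

lemma vadd_vecs: "p > 0 \<Longrightarrow> vadd p d x y \<in> vecs p d"
  unfolding vecs_def vadd_def by auto

lemma vsub_vadd: assumes "y \<in> vecs p d" shows "vsub p d (vadd p d y a) a = y"
proof
  fix i show "vsub p d (vadd p d y a) a i = y i"
  proof (cases "i < d")
    case True
    have "((y i + a i) mod int p - a i) mod int p = (y i + a i - a i) mod int p"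
      by (rule mod_diff_left_eq)
    also have "\<dots> = y i" using assms True unfolding vecs_def by simp
    finally show ?thesis using True unfolding vsub_def vadd_def by simp
  next
    case False then show ?thesis using assms unfolding vsub_def vecs_def by simp
  qed
qed

lemma vadd_vsub: assumes "x \<in> vecs p d" shows "vadd p d (vsub p d x a) a = x"
proof
  fix i show "vadd p d (vsub p d x a) a i = x i"
  proof (cases "i < d")
    case True
    have "((x i - a i) mod int p + a i) mod int p = (x i - a i + a i) mod int p"
      by (rule mod_add_left_eq)
    also have "\<dots> = x i" using assms True unfolding vecs_def by simp
    finally show ?thesis using True unfolding vsub_def vadd_def by simp
  next
    case False then show ?thesis using assms unfolding vadd_def vecs_def by simp
  qed
qed

lemma vadd_bij: assumes "p > 0" shows "bij_betw (\<lambda>y. vadd p d y a) (vecs p d) (vecs p d)"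
  by (rule bij_betw_byWitness[where f'="\<lambda>x. vsub p d x a"])
     (auto simp: vsub_vadd vadd_vsub vadd_vecs vsub_vecs assms)

lemma reindex_vadd: assumes "p > 0"
  shows "(\<Sum>x\<in>vecs p d. h x) = (\<Sum>y\<in>vecs p d. h (vadd p d y a))"
  by (rule sum.reindex_bij_betw[OF vadd_bij[OF assms], symmetric])

lemma chi_vadd: assumes "p > 0"
  shows "chi p (dotp d (vadd p d y a) b) = chi p (dotp d y b) * chi p (dotp d a b)"
proof -
  have "dotp d (vadd p d y a) b mod int p = (dotp d y b + dotp d a b) mod int p"
  proof -
    have "dotp d (vadd p d y a) b mod int p = (\<Sum>i<d. ((y i + a i) mod int p) * b i) mod int p"
      unfolding dotp_def vadd_def by simp
    also have "\<dots> = (\<Sum>i<d. ((y i + a i) mod int p) * b i mod int p) mod int p"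
      by (simp add: mod_sum_eq)
    also have "\<dots> = (\<Sum>i<d. (y i + a i) * b i mod int p) mod int p"
      by (simp add: mod_mult_left_eq)
    also have "\<dots> = (\<Sum>i<d. (y i + a i) * b i) mod int p"
      by (simp add: mod_sum_eq)
    also have "\<dots> = (dotp d y b + dotp d a b) mod int p"
      unfolding dotp_def by (simp add: distrib_right sum.distrib)
    finally show ?thesis .
  qed
  then have "chi p (dotp d (vadd p d y a) b) = chi p (dotp d y b + dotp d a b)"
    by (rule chi_mod[OF assms])
  then show ?thesis by (simp add: chi_add)
qed


lemma sum_prod_split: "(\<Sum>i\<in>A\<times>B. F i) = (\<Sum>a\<in>A. \<Sum>b\<in>B. F (a,b))"
  by (simp add: sum.cartesian_product)

lemma sum_single: assumes "finite A" "a0 \<in> A" "\<And>a. a \<in> A \<Longrightarrow> a \<noteq> a0 \<Longrightarrow> h a = 0"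
  shows "sum h A = h a0"
proof -
  have "sum h A = h a0 + sum h (A - {a0})" using assms(1,2) by (simp add: sum.remove)
  also have "sum h (A - {a0}) = 0" using assms(3) by (intro sum.neutral) auto
  finally show ?thesis by simp
qed

lemma parseval:
  assumes "finite S" "finite I" "orthonormal_basis_on S I \<phi>" "x \<in> S"
  shows "(\<Sum>i\<in>I. \<phi> i x * cnj (\<phi> i x)) = 1"
proof -
  let ?f = "\<lambda>z. if z = x then (1::complex) else 0"
  have sp: "spans_on S I \<phi>" using assms(3) unfolding orthonormal_basis_on_def by blast
  obtain c where c: "\<forall>z\<in>S. ?f z = (\<Sum>i\<in>I. c i * \<phi> i z)"
    using sp[unfolded spans_on_def, THEN spec, of ?f] by blast
  have orth: "\<forall>i\<in>I. \<forall>j\<in>I. inner_on S (\<phi> i) (\<phi> j) = (if i = j then 1 else 0)"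
    using assms(3) unfolding orthonormal_basis_on_def by blast
  have cj: "c j = cnj (\<phi> j x)" if j: "j \<in> I" for j
  proof -
    have "inner_on S ?f (\<phi> j) = cnj (\<phi> j x)"
    proof -
      have "inner_on S ?f (\<phi> j) = (\<Sum>z\<in>S. if z = x then cnj (\<phi> j z) else 0)"
        unfolding inner_on_def by (intro sum.cong) auto
      also have "\<dots> = cnj (\<phi> j x)" using assms(1,4) by (simp add: sum.delta')
      finally show ?thesis .
    qed
    moreover have "inner_on S ?f (\<phi> j) = (\<Sum>z\<in>S. (\<Sum>i\<in>I. c i * \<phi> i z) * cnj (\<phi> j z))"
      unfolding inner_on_def using c by (intro sum.cong) auto
    moreover have "\<dots> = (\<Sum>i\<in>I. c i * inner_on S (\<phi> i) (\<phi> j))"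
      unfolding inner_on_def by (simp add: sum_distrib_left sum_distrib_right sum.swap[of _ S] mult.assoc)
    moreover have "\<dots> = (\<Sum>i\<in>I. if i = j then c i else 0)"
      using orth j by (intro sum.cong) auto
    moreover have "\<dots> = c j" using assms(2) j by simp
    ultimately show ?thesis by simp
  qed
  have "1 = ?f x" by simp
  also have "\<dots> = (\<Sum>i\<in>I. c i * \<phi> i x)" using c assms(4) by blast
  also have "\<dots> = (\<Sum>i\<in>I. \<phi> i x * cnj (\<phi> i x))" using cj by (intro sum.cong) auto
  finally show ?thesis by simp
qed

lemma inner_same_a:
  assumes "p > 0"
  shows "inner_on (vecs p d) (gabor p d g a b) (gabor p d g a b') =
    chi p (dotp d a b) * cnj (chi p (dotp d a b')) *
    (\<Sum>y\<in>vecs p d. g y * cnj (g y) * (chi p (dotp d y b) * cnj (chi p (dotp d y b'))))"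
proof -
  have "inner_on (vecs p d) (gabor p d g a b) (gabor p d g a b') =
     (\<Sum>y\<in>vecs p d. gabor p d g a b (vadd p d y a) * cnj (gabor p d g a b' (vadd p d y a)))"
    unfolding inner_on_def by (rule reindex_vadd[OF assms])
  also have "\<dots> = (\<Sum>y\<in>vecs p d. chi p (dotp d a b) * cnj (chi p (dotp d a b')) *
     (g y * cnj (g y) * (chi p (dotp d y b) * cnj (chi p (dotp d y b')))))"
    by (intro sum.cong) (auto simp: gabor_def vsub_vadd chi_vadd[OF assms])
  finally show ?thesis by (simp add: sum_distrib_left)
qed


lemma gabor_cross: "gabor p d g a b x * cnj (gabor p d g a' b x) = g (vsub p d x a) * cnj (g (vsub p d x a'))"
proof -
  have "gabor p d g a b x * cnj (gabor p d g a' b x) =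
     g (vsub p d x a) * cnj (g (vsub p d x a')) * (chi p (dotp d x b) * cnj (chi p (dotp d x b)))"
    unfolding gabor_def by (simp add: algebra_simps)
  then show ?thesis by (simp add: chi_cnj)
qed

lemma gabor_sq: "gabor p d g a b x * cnj (gabor p d g a b x) = of_real ((cmod (g (vsub p d x a)))^2)"
  unfolding gabor_cross by (rule complex_norm_square[symmetric])

lemma inner_const:
  assumes p0: "p > 0" and EV: "E \<subseteq> vecs p d" and cE: "card E > 0"
    and gform: "\<forall>x\<in>vecs p d. g x = (if x \<in> E then complex_of_real (1 / sqrt (real (card E))) else 0)"
  shows "inner_on (vecs p d) (gabor p d g a b) (gabor p d g a b') =
    chi p (dotp d a b) * cnj (chi p (dotp d a b')) * (of_real (1 / real (card E)) *
    inner_on E (\<lambda>x. chi p (dotp d x b)) (\<lambda>x. chi p (dotp d x b')))"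
proof -
  have finV: "finite (vecs p d)" by (rule vecs_finite)
  have "(\<Sum>y\<in>vecs p d. g y * cnj (g y) * (chi p (dotp d y b) * cnj (chi p (dotp d y b')))) =
     (\<Sum>y\<in>vecs p d. if y \<in> E then of_real (1 / real (card E)) * (chi p (dotp d y b) * cnj (chi p (dotp d y b'))) else 0)"
  proof (intro sum.cong refl)
    fix y assume y: "y \<in> vecs p d"
    have "complex_of_real (1 / sqrt (real (card E))) * cnj (complex_of_real (1 / sqrt (real (card E))))
       = of_real (1 / real (card E))"
    proof -
      have r: "(1 / sqrt (real (card E)))^2 = 1 / real (card E)" using cE by (simp add: power_divide)
      have "\<And>r::real. complex_of_real r * cnj (complex_of_real r) = of_real (r^2)"
        by (simp add: power2_eq_square)
      then show ?thesis by (simp only: r)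
    qed
    then show "g y * cnj (g y) * (chi p (dotp d y b) * cnj (chi p (dotp d y b'))) =
       (if y \<in> E then of_real (1 / real (card E)) * (chi p (dotp d y b) * cnj (chi p (dotp d y b'))) else 0)"
      using gform y by auto
  qed
  also have "\<dots> = (\<Sum>y\<in>E. of_real (1 / real (card E)) * (chi p (dotp d y b) * cnj (chi p (dotp d y b'))))"
    using sum.inter_restrict[OF finV, of "\<lambda>y. of_real (1 / real (card E)) * (chi p (dotp d y b) * cnj (chi p (dotp d y b')))" E] EV
    by (simp add: Int_absorb1)
  also have "\<dots> = of_real (1 / real (card E)) * inner_on E (\<lambda>x. chi p (dotp d x b)) (\<lambda>x. chi p (dotp d x b'))"
    unfolding inner_on_def by (simp add: sum_distrib_left)
  finally show ?thesis by (simp add: inner_same_a[OF p0])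
qed

lemma chi_prod_nz: "chi p s * cnj (chi p t) \<noteq> 0"
proof -
  have "norm (chi p s * cnj (chi p t)) = 1" by (simp add: norm_mult chi_norm)
  then show ?thesis by auto
qed

lemma inner_E_self: "inner_on E (\<lambda>x. chi p (dotp d x b)) (\<lambda>x. chi p (dotp d x b)) = of_nat (card E)"
  unfolding inner_on_def by (simp add: chi_cnj)

lemma fwd:
  fixes p d :: nat and g :: "(nat \<Rightarrow> int) \<Rightarrow> complex" and A B E :: "(nat \<Rightarrow> int) set"
  assumes p0: "p > 0"
    and AV: "A \<subseteq> vecs p d" and BV: "B \<subseteq> vecs p d"
    and nrm: "(\<Sum>x\<in>vecs p d. (cmod (g x))\<^sup>2) = 1"
    and Edef: "E = {x \<in> vecs p d. g x \<noteq> 0}"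
    and pos: "\<forall>x\<in>E. g x \<in> \<real> \<and> Re (g x) > 0"
    and onb: "orthonormal_basis_on (vecs p d) (A \<times> B) (\<lambda>(a, b). gabor p d g a b)"
  shows "(\<forall>x\<in>vecs p d. g x = (if x \<in> E then complex_of_real (1 / sqrt (real (card E))) else 0))
           \<and> spectral_pair p d E B \<and> tiling_pair p d E A"
proof -
  define V where "V = vecs p d"
  have finV: "finite V" unfolding V_def by (rule vecs_finite)
  have finA: "finite A" using AV finV V_def finite_subset by blast
  have finB: "finite B" using BV finV V_def finite_subset by blast
  have EV: "E \<subseteq> V" using Edef V_def by auto
  have finE: "finite E" using EV finV finite_subset by blast
  have vsV: "vsub p d x a \<in> V" for x a unfolding V_def by (rule vsub_vecs[OF p0])
  have vaV: "vadd p d x a \<in> V" for x a unfolding V_def by (rule vadd_vecs[OF p0])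
  have gE: "z \<in> V \<Longrightarrow> g z \<noteq> 0 \<longleftrightarrow> z \<in> E" for z using Edef V_def by auto
  have greal: "g z = of_real (Re (g z)) \<and> Re (g z) \<ge> 0 \<and> (z \<in> E \<longleftrightarrow> Re (g z) > 0)" if z: "z \<in> V" for z
  proof (cases "z \<in> E")
    case True
    then show ?thesis using pos by (auto simp: complex_is_Real_iff complex_eq_iff)
  next
    case False
    then show ?thesis using gE[OF z] by auto
  qed
  have P1: "real (card B) * (\<Sum>a\<in>A. (cmod (g (vsub p d x a)))^2) = 1" if x: "x \<in> V" for x
  proof -
    have "(\<Sum>i\<in>A\<times>B. (\<lambda>(a, b). gabor p d g a b) i x * cnj ((\<lambda>(a, b). gabor p d g a b) i x)) = 1"
      by (rule parseval[OF finV[unfolded V_def] finite_cartesian_product[OF finA finB] onb x[unfolded V_def]])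
    also have "(\<Sum>i\<in>A\<times>B. (\<lambda>(a, b). gabor p d g a b) i x * cnj ((\<lambda>(a, b). gabor p d g a b) i x))
       = (\<Sum>a\<in>A. \<Sum>b\<in>B. of_real ((cmod (g (vsub p d x a)))^2))"
      by (simp add: sum_prod_split gabor_sq)
    also have "\<dots> = of_real (real (card B) * (\<Sum>a\<in>A. (cmod (g (vsub p d x a)))^2))"
      by (simp add: sum_distrib_left)
    finally show ?thesis by (metis of_real_eq_1_iff)
  qed
  have orth: "\<forall>i\<in>A\<times>B. \<forall>j\<in>A\<times>B. inner_on V ((\<lambda>(a, b). gabor p d g a b) i) ((\<lambda>(a, b). gabor p d g a b) j) = (if i = j then 1 else 0)"
    using onb unfolding orthonormal_basis_on_def V_def by blast
  have sp: "spans_on V (A\<times>B) (\<lambda>(a, b). gabor p d g a b)"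
    using onb unfolding orthonormal_basis_on_def V_def by blast
  have zV: "(\<lambda>i. 0) \<in> V" unfolding V_def by (rule zero_vecs[OF p0])
  have Bne: "B \<noteq> {}" using P1[OF zV] by auto
  have Ane: "A \<noteq> {}" using P1[OF zV] by auto
  obtain b0 where b0: "b0 \<in> B" using Bne by blast
  obtain a0 where a0: "a0 \<in> A" using Ane by blast
  have Disj: "vsub p d x a' \<notin> E" if "a \<in> A" "a' \<in> A" "a \<noteq> a'" "x \<in> V" "vsub p d x a \<in> E" for a a' x
  proof
    assume a'E: "vsub p d x a' \<in> E"
    have "inner_on V (gabor p d g a b0) (gabor p d g a' b0) = 0"
      using orth that(1,2,3) b0 by fastforce
    moreover have "inner_on V (gabor p d g a b0) (gabor p d g a' b0) =
       of_real (\<Sum>z\<in>V. Re (g (vsub p d z a)) * Re (g (vsub p d z a')))"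
    proof -
      have "inner_on V (gabor p d g a b0) (gabor p d g a' b0) = (\<Sum>z\<in>V. g (vsub p d z a) * cnj (g (vsub p d z a')))"
        unfolding inner_on_def by (simp add: gabor_cross)
      also have "\<dots> = (\<Sum>z\<in>V. of_real (Re (g (vsub p d z a)) * Re (g (vsub p d z a'))))"
      proof (intro sum.cong refl)
        fix z assume "z \<in> V"
        have e1: "g (vsub p d z a) = of_real (Re (g (vsub p d z a)))" using greal[OF vsV] by blast
        have e2: "g (vsub p d z a') = of_real (Re (g (vsub p d z a')))" using greal[OF vsV] by blast
        show "g (vsub p d z a) * cnj (g (vsub p d z a')) = of_real (Re (g (vsub p d z a)) * Re (g (vsub p d z a')))"
          by (subst e1, subst e2) simp
      qed
      also have "\<dots> = of_real (\<Sum>z\<in>V. Re (g (vsub p d z a)) * Re (g (vsub p d z a')))" by simp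
      finally show ?thesis .
    qed
    ultimately have s0: "(\<Sum>z\<in>V. Re (g (vsub p d z a)) * Re (g (vsub p d z a'))) = 0"
      by (metis of_real_eq_0_iff)
    have "\<forall>z\<in>V. Re (g (vsub p d z a)) * Re (g (vsub p d z a')) = 0"
      using iffD1[OF sum_nonneg_eq_0_iff[OF finV] s0] greal[OF vsV] by auto
    then have "Re (g (vsub p d x a)) * Re (g (vsub p d x a')) = 0" using that(4) by blast
    moreover have "Re (g (vsub p d x a)) > 0" "Re (g (vsub p d x a')) > 0"
      using greal[OF vsV] that(5) a'E by blast+
    ultimately show False by simp
  qed
  have tile: "tiling_pair p d E A"
    unfolding tiling_pair_def
  proof
    fix x assume "x \<in> vecs p d"
    then have x: "x \<in> V" unfolding V_def .
    have "(\<Sum>a\<in>A. (cmod (g (vsub p d x a)))^2) \<noteq> 0" using P1[OF x] by auto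
    then obtain a1 where a1: "a1 \<in> A" "(cmod (g (vsub p d x a1)))^2 \<noteq> 0"
      by (meson sum.neutral)
    then have a1E: "vsub p d x a1 \<in> E" using gE[OF vsV] by auto
    show "(\<Sum>a\<in>A. if vsub p d x a \<in> E then 1 else 0 :: int) = 1"
      by (subst sum_single[OF finA a1(1)]) (use Disj[OF a1(1) _ _ x a1E] a1E in auto)
  qed
  have gval: "real (card B) * (cmod (g y))^2 = 1" if y: "y \<in> E" for y
  proof -
    let ?x = "vadd p d y a0"
    have yV: "y \<in> V" using y EV by blast
    have xa0: "vsub p d ?x a0 = y" using vsub_vadd yV V_def by blast
    have "g (vsub p d ?x a) = 0" if "a \<in> A" "a \<noteq> a0" for a
      using Disj[OF a0 that(1) _ vaV[of y a0]] that(2) y xa0 gE[OF vsV] by auto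
    then have "(\<Sum>a\<in>A. (cmod (g (vsub p d ?x a)))^2) = (cmod (g y))^2"
      by (subst sum_single[OF finA a0]) (auto simp: xa0)
    then show ?thesis using P1[OF vaV[of y a0]] by simp
  qed
  have cBpos: "card B > 0" using finB Bne by (simp add: card_gt_0_iff)
  have cardEB: "card E = card B"
  proof -
    have "1 = (\<Sum>x\<in>V. (cmod (g x))^2)" using nrm V_def by simp
    also have "\<dots> = (\<Sum>x\<in>V. if x \<in> E then 1 / real (card B) else 0)"
    proof (intro sum.cong refl)
      fix x assume x: "x \<in> V"
      show "(cmod (g x))^2 = (if x \<in> E then 1 / real (card B) else 0)"
        using gval[of x] gE[OF x] cBpos by (auto simp: field_simps)
    qed
    also have "\<dots> = (\<Sum>x\<in>E. 1 / real (card B))"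
      using sum.inter_restrict[OF finV, of "\<lambda>_. 1 / real (card B)" E] EV
      by (simp add: Int_absorb1)
    also have "\<dots> = real (card E) / real (card B)" by simp
    finally have "real (card E) = real (card B)" using cBpos by (simp add: field_simps)
    then show ?thesis by simp
  qed
  have cEpos: "card E > 0" using cBpos cardEB by simp
  define \<kappa> where "\<kappa> = complex_of_real (1 / sqrt (real (card E)))"
  have gform: "\<forall>x\<in>V. g x = (if x \<in> E then \<kappa> else 0)"
  proof
    fix x assume x: "x \<in> V"
    show "g x = (if x \<in> E then \<kappa> else 0)"
    proof (cases "x \<in> E")
      case True
      define r where "r = Re (g x)"
      have gx: "g x = of_real r" "r > 0" using greal[OF x] True r_def by auto
      have "real (card E) * r^2 = 1" using gval[OF True] gx cardEB by simp
      then have "r^2 = 1 / real (card E)" using cEpos by (simp add: field_simps)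
      then have "r = sqrt (1 / real (card E))" using gx(2) by (metis abs_of_pos real_sqrt_abs)
      then show ?thesis using gx True unfolding \<kappa>_def by (simp add: real_sqrt_divide)
    next
      case False then show ?thesis using gE[OF x] by auto
    qed
  qed
  have gform': "\<forall>x\<in>vecs p d. g x = (if x \<in> E then complex_of_real (1 / sqrt (real (card E))) else 0)"
    using gform unfolding V_def \<kappa>_def .
  have EV': "E \<subseteq> vecs p d" using EV V_def by simp
  have so: "inner_on E (\<lambda>x. chi p (dotp d x b)) (\<lambda>x. chi p (dotp d x b')) = 0"
    if "b \<in> B" "b' \<in> B" "b \<noteq> b'" for b b'
  proof -
    have "inner_on V (gabor p d g a0 b) (gabor p d g a0 b') = 0"
      using orth that a0 by fastforce
    then have "chi p (dotp d a0 b) * cnj (chi p (dotp d a0 b')) * (of_real (1 / real (card E)) *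
      inner_on E (\<lambda>x. chi p (dotp d x b)) (\<lambda>x. chi p (dotp d x b'))) = 0"
      using inner_const[OF p0 EV' cEpos gform'] V_def by simp
    then show ?thesis using chi_prod_nz cEpos by auto
  qed
  have sspan: "spans_on E B (\<lambda>b x. chi p (dotp d x b))"
    unfolding spans_on_def
  proof
    fix f :: "(nat \<Rightarrow> int) \<Rightarrow> complex"
    obtain c where c: "\<forall>x\<in>V. f (vsub p d x a0) = (\<Sum>i\<in>A\<times>B. c i * (\<lambda>(a, b). gabor p d g a b) i x)"
      using sp[unfolded spans_on_def, THEN spec, of "\<lambda>x. f (vsub p d x a0)"] by blast
    show "\<exists>c. \<forall>x\<in>E. f x = (\<Sum>i\<in>B. c i * chi p (dotp d x i))"
    proof (intro exI ballI)
      fix y assume y: "y \<in> E"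
      let ?x = "vadd p d y a0"
      have yV: "y \<in> V" using y EV by blast
      have xa0: "vsub p d ?x a0 = y" using vsub_vadd yV V_def by blast
      have z: "g (vsub p d ?x a) = 0" if "a \<in> A" "a \<noteq> a0" for a
        using Disj[OF a0 that(1) _ vaV[of y a0]] that(2) y xa0 gE[OF vsV] by auto
      have "f y = (\<Sum>a\<in>A. \<Sum>b\<in>B. c (a, b) * gabor p d g a b ?x)"
        using c[rule_format, OF vaV[of y a0]] xa0 by (simp add: sum_prod_split)
      also have "\<dots> = (\<Sum>b\<in>B. c (a0, b) * gabor p d g a0 b ?x)"
        by (rule sum_single[OF finA a0]) (simp add: gabor_def z)
      also have "\<dots> = (\<Sum>b\<in>B. (c (a0, b) * \<kappa> * chi p (dotp d a0 b)) * chi p (dotp d y b))"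
        by (intro sum.cong refl) (simp add: gabor_def xa0 gform[rule_format, OF yV] y chi_vadd[OF p0])
      finally show "f y = (\<Sum>b\<in>B. (c (a0, b) * \<kappa> * chi p (dotp d a0 b)) * chi p (dotp d y b))" .
    qed
  qed
  have spec: "spectral_pair p d E B"
    unfolding spectral_pair_def orthogonal_basis_on_def
    using so sspan cEpos by (auto simp: inner_E_self)
  show ?thesis using gform tile spec unfolding V_def \<kappa>_def by blast
qed


lemma sum_indicator_int: "finite A \<Longrightarrow> (\<Sum>a\<in>A. if P a then 1 else 0 :: int) = int (card {a\<in>A. P a})"
proof -
  assume fA: "finite A"
  have "(\<Sum>a\<in>A. if P a then 1 else 0 :: int) = (\<Sum>a\<in>A \<inter> {a. P a}. 1)"
    using sum.inter_restrict[OF fA, of "\<lambda>_. 1::int" "{a. P a}"] by simp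
  also have "\<dots> = int (card (A \<inter> {a. P a}))" by simp
  finally show ?thesis by (simp add: Collect_conj_eq Int_commute inf_set_def)
qed

lemma bwd:
  fixes p d :: nat and g :: "(nat \<Rightarrow> int) \<Rightarrow> complex" and A B E :: "(nat \<Rightarrow> int) set"
  assumes p0: "p > 0"
    and AV: "A \<subseteq> vecs p d" and BV: "B \<subseteq> vecs p d"
    and nrm: "(\<Sum>x\<in>vecs p d. (cmod (g x))\<^sup>2) = 1"
    and Edef: "E = {x \<in> vecs p d. g x \<noteq> 0}"
    and gform: "\<forall>x\<in>vecs p d. g x = (if x \<in> E then complex_of_real (1 / sqrt (real (card E))) else 0)"
    and spec: "spectral_pair p d E B" and tile: "tiling_pair p d E A"
  shows "orthonormal_basis_on (vecs p d) (A \<times> B) (\<lambda>(a, b). gabor p d g a b)"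
proof -
  define V where "V = vecs p d"
  have finV: "finite V" unfolding V_def by (rule vecs_finite)
  have finA: "finite A" using AV finV V_def finite_subset by blast
  have EV: "E \<subseteq> V" using Edef V_def by auto
  have finE: "finite E" using EV finV finite_subset by blast
  have vsV: "vsub p d x a \<in> V" for x a unfolding V_def by (rule vsub_vecs[OF p0])
  have vaV: "vadd p d x a \<in> V" for x a unfolding V_def by (rule vadd_vecs[OF p0])
  have Ene: "E \<noteq> {}"
  proof
    assume "E = {}"
    then have "(\<Sum>x\<in>vecs p d. (cmod (g x))\<^sup>2) = 0" using gform by simp
    then show False using nrm by simp
  qed
  have cEpos: "card E > 0" using Ene finE by (simp add: card_gt_0_iff)
  have gz: "g z = 0" if "z \<in> V" "z \<notin> E" for z using gform that V_def by auto
  have uniq: "\<exists>a0. {a\<in>A. vsub p d x a \<in> E} = {a0}" if x: "x \<in> V" for x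
  proof -
    have "(\<Sum>a\<in>A. if vsub p d x a \<in> E then 1 else 0 :: int) = 1"
      using tile x unfolding tiling_pair_def V_def by blast
    then have "card {a\<in>A. vsub p d x a \<in> E} = 1" by (simp add: sum_indicator_int[OF finA])
    then show ?thesis by (simp add: card_1_singleton_iff)
  qed
  have same: "a = a'" if h: "x \<in> V" "a \<in> A" "a' \<in> A" "vsub p d x a \<in> E" "vsub p d x a' \<in> E" for x a a'
  proof -
    obtain a0 where a0: "{a\<in>A. vsub p d x a \<in> E} = {a0}" using uniq[OF h(1)] by blast
    have "a \<in> {a\<in>A. vsub p d x a \<in> E}" "a' \<in> {a\<in>A. vsub p d x a \<in> E}" using h by auto
    then show ?thesis unfolding a0 by simp
  qed
  have sorth: "inner_on E (\<lambda>x. chi p (dotp d x b)) (\<lambda>x. chi p (dotp d x b')) = 0"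
    if "b \<in> B" "b' \<in> B" "b \<noteq> b'" for b b'
    using spec that unfolding spectral_pair_def orthogonal_basis_on_def by blast
  have sspan: "spans_on E B (\<lambda>b x. chi p (dotp d x b))"
    using spec unfolding spectral_pair_def orthogonal_basis_on_def by blast
  have EV': "E \<subseteq> vecs p d" using EV V_def by simp
  have orth: "inner_on V ((\<lambda>(a, b). gabor p d g a b) i) ((\<lambda>(a, b). gabor p d g a b) j) = (if i = j then 1 else 0)"
    if hij: "i \<in> A \<times> B" "j \<in> A \<times> B" for i j
  proof -
    obtain a b a' b' where ij: "i = (a, b)" "j = (a', b')" "a \<in> A" "a' \<in> A" "b \<in> B" "b' \<in> B"
      using hij by blast
    show ?thesis
    proof (cases "a = a'")
      case False
      have "inner_on V (gabor p d g a b) (gabor p d g a' b') = 0"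
        unfolding inner_on_def
      proof (rule sum.neutral, rule ballI)
        fix x assume x: "x \<in> V"
        have "g (vsub p d x a) = 0 \<or> g (vsub p d x a') = 0"
          using same[OF x ij(3,4)] False gz[OF vsV] by blast
        then show "gabor p d g a b x * cnj (gabor p d g a' b' x) = 0"
          unfolding gabor_def by auto
      qed
      then show ?thesis using ij False by simp
    next
      case True
      have ic: "inner_on V (gabor p d g a b) (gabor p d g a b') =
        chi p (dotp d a b) * cnj (chi p (dotp d a b')) * (of_real (1 / real (card E)) *
        inner_on E (\<lambda>x. chi p (dotp d x b)) (\<lambda>x. chi p (dotp d x b')))"
        using inner_const[OF p0 EV' cEpos gform] V_def by simp
      show ?thesis
      proof (cases "b = b'")
        case True
        then show ?thesis using ic ij \<open>a = a'\<close> cEpos by (simp add: inner_E_self chi_cnj)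
      next
        case False
        then show ?thesis using ic ij \<open>a = a'\<close> sorth by simp
      qed
    qed
  qed
  have span: "spans_on V (A \<times> B) (\<lambda>(a, b). gabor p d g a b)"
    unfolding spans_on_def
  proof
    fix f :: "(nat \<Rightarrow> int) \<Rightarrow> complex"
    have "\<forall>a. \<exists>dd. \<forall>y\<in>E. f (vadd p d y a) = (\<Sum>b\<in>B. dd b * chi p (dotp d y b))"
    proof
      fix a
      show "\<exists>dd. \<forall>y\<in>E. f (vadd p d y a) = (\<Sum>b\<in>B. dd b * chi p (dotp d y b))"
        using sspan[unfolded spans_on_def, THEN HOL.spec, of "\<lambda>y. f (vadd p d y a)"] by simp
    qed
    then obtain D where D: "\<And>a y. y \<in> E \<Longrightarrow> f (vadd p d y a) = (\<Sum>b\<in>B. D a b * chi p (dotp d y b))"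
      by metis
    define c where "c i = of_real (sqrt (real (card E))) * D (fst i) (snd i) * cnj (chi p (dotp d (fst i) (snd i)))" for i
    show "\<exists>c. \<forall>x\<in>V. f x = (\<Sum>i\<in>A \<times> B. c i * (\<lambda>(a, b). gabor p d g a b) i x)"
    proof (intro exI ballI)
      fix x assume x: "x \<in> V"
      obtain a0 where a0: "{a\<in>A. vsub p d x a \<in> E} = {a0}" using uniq[OF x] by blast
      have "a0 \<in> {a\<in>A. vsub p d x a \<in> E}" unfolding a0 by simp
      then have a0A: "a0 \<in> A" and yE: "vsub p d x a0 \<in> E" by auto
      define y where "y = vsub p d x a0"
      have xy: "x = vadd p d y a0" using vadd_vsub x V_def y_def by simp
      have z: "g (vsub p d x a) = 0" if "a \<in> A" "a \<noteq> a0" for a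
      proof -
        have "a \<notin> {a\<in>A. vsub p d x a \<in> E}" unfolding a0 using that(2) by simp
        then show ?thesis using that(1) gz[OF vsV] by simp
      qed
      have sq: "complex_of_real (sqrt (real (card E))) * complex_of_real (1 / sqrt (real (card E))) = 1"
        using cEpos by (simp flip: of_real_mult)
      have "(\<Sum>i\<in>A \<times> B. c i * (\<lambda>(a, b). gabor p d g a b) i x) = (\<Sum>a\<in>A. \<Sum>b\<in>B. c (a, b) * gabor p d g a b x)"
        by (simp add: sum_prod_split)
      also have "\<dots> = (\<Sum>b\<in>B. c (a0, b) * gabor p d g a0 b x)"
        by (rule sum_single[OF finA a0A]) (simp add: gabor_def z)
      also have "\<dots> = (\<Sum>b\<in>B. D a0 b * chi p (dotp d y b))"
      proof (intro sum.cong refl)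
        fix b assume "b \<in> B"
        have gy: "g (vsub p d x a0) = complex_of_real (1 / sqrt (real (card E)))"
          using gform yE vsV V_def by auto
        have "c (a0, b) * gabor p d g a0 b x =
          (complex_of_real (sqrt (real (card E))) * complex_of_real (1 / sqrt (real (card E)))) *
          (chi p (dotp d a0 b) * cnj (chi p (dotp d a0 b))) * (D a0 b * chi p (dotp d y b))"
          unfolding c_def gabor_def gy by (subst xy, simp add: chi_vadd[OF p0] algebra_simps)
        then show "c (a0, b) * gabor p d g a0 b x = D a0 b * chi p (dotp d y b)"
          by (simp only: sq chi_cnj mult_1_left)
      qed
      also have "\<dots> = f x" using D[OF yE[folded y_def], of a0] xy by simp
      finally show "f x = (\<Sum>i\<in>A \<times> B. c i * (\<lambda>(a, b). gabor p d g a b) i x)" by simp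
    qed
  qed
  show ?thesis unfolding orthonormal_basis_on_def using orth span V_def by blast
qed

theorem theorem1p4:
  fixes p d :: nat and g :: "(nat \<Rightarrow> int) \<Rightarrow> complex" and A B E :: "(nat \<Rightarrow> int) set"
  assumes "prime p" and "d \<ge> 1"
    and "A \<subseteq> vecs p d" and "B \<subseteq> vecs p d"
    and "(\<Sum>x\<in>vecs p d. (cmod (g x))\<^sup>2) = 1"
    and "E = {x \<in> vecs p d. g x \<noteq> 0}"
    and "\<forall>x\<in>E. g x \<in> \<real> \<and> Re (g x) > 0"
  shows "orthonormal_basis_on (vecs p d) (A \<times> B) (\<lambda>(a, b). gabor p d g a b) \<longleftrightarrow>
           (\<forall>x\<in>vecs p d. g x = (if x \<in> E then complex_of_real (1 / sqrt (real (card E))) else 0))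
           \<and> spectral_pair p d E B \<and> tiling_pair p d E A"
proof -
  have p0: "p > 0" using assms(1) prime_gt_0_nat by blast
  show ?thesis
    using fwd[OF p0 assms(3,4,5,6,7)] bwd[OF p0 assms(3,4,5,6)] by blast
qed

end
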